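(* Let $\mathcal X,\mathcal C,d,G_{\mathcal C}$ be as in the context, let $\sigma$ be any cycle decomposition of $G_{\mathcal C}$, $\epsilon\in[0,1]$, $N\ge1$. With $\mathcal B_{\mathcal C}(\sigma)$ of size $M=2^{|\sigma|}$, $\mathbb P_0=p_0^N$ and $\mathbb P_1=\frac1M\sum_{b\in\mathcal B_{\mathcal C}(\sigma)}q_{b,\epsilon}^N$, $$\chi^2(\mathbb P_1,\mathbb P_0)+1\le\exp\Big(\frac{N^2\epsilon^4}{2d}\alpha(\sigma)\Big).$$
   Context: $\mathcal X$ is a finite set of $n$ items, $\mathcal C$ a collection of $m\ge n$ distinct subsets of $\mathcal X$ of size at least 2, $d=\sum_{C\in\mathcal C}|C|$; coordinates are indexed by pairs $(x,C)$, $x\in C\in\mathcal C$. $G_{\mathcal C}$ is the bipartite graph with item-nodes $\mathcal X$, set-nodes $\mathcal C$, and an edge $(x,C)$ iff $x\in C$. Standing assumptions: $G_{\mathcal C}$ connected, every $|C|$ even, every item in an even number of sets. A cycle decomposition $\sigma$ partitions the edges of $G_{\mathcal C}$ into edge-disjoint simple cycles $\sigma_1,\dots,\sigma_{|\sigma|}$; $\alpha(\sigma)=\frac1d\sum_i|\sigma_i|^2$ with $|\sigma_i|$ the number of edges of $\sigma_i$. $\mathcal B_{\mathcal C}(\sigma)$ is the set of $2^{|\sigma|}$ vectors $b\in\{-1,1\}^d$ obtained by choosing independently one of the two cyclic orientations of each $\sigma_i$ and setting $b_{(x,C)}=1$ if edge $(x,C)$ is oriented from $x$ to $C$, $-1$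 otherwise. $p_0$ is uniform on the $d$ pairs; $q_{b,\epsilon}((x,C))=\frac1d+\frac{\epsilon b_{(x,C)}}d$; $\mu^N$ denotes the law of $N$ i.i.d. samples; $\chi^2(P,Q)=\mathbb E_Q[(dP/dQ)^2]-1$. *)

theory Defs
  imports Complex_Main "HOL-Library.FuncSet"
begin

definition edges :: "'a set set \<Rightarrow> ('a \<times> 'a set) set" where
  "edges CC = {(x, S). S \<in> CC \<and> x \<in> S}"

definition dim :: "'a set set \<Rightarrow> nat" where
  "dim CC = card (edges CC)"

definition gadj :: "'a set set \<Rightarrow> ('a + 'a set) \<Rightarrow> ('a + 'a set) \<Rightarrow> bool" where
  "gadj CC u v = (\<exists>x S. (x, S) \<in> edges CC \<and>
      ((u = Inl x \<and> v = Inr S) \<or> (u = Inr S \<and> v = Inl x)))"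

definition gconnected :: "'a set \<Rightarrow> 'a set set \<Rightarrow> bool" where
  "gconnected X CC = (\<forall>u\<in>Inl ` X \<union> Inr ` CC. \<forall>v\<in>Inl ` X \<union> Inr ` CC. (gadj CC)\<^sup>*\<^sup>* u v)"

text \<open>A simple cycle of G_C, given by items xs = [x_0,...,x_{k-1}] and sets cs = [C_0,...,C_{k-1}]
  (k >= 2, all distinct), traversed x_0 -> C_0 -> x_1 -> C_1 -> ... -> C_{k-1} -> x_0.\<close>
type_synonym 'a cycle = "'a list \<times> 'a set list"

definition is_cycle :: "'a set set \<Rightarrow> 'a cycle \<Rightarrow> bool" where
  "is_cycle CC c = (let xs = fst c; cs = snd c; k = length xs in
     length cs = k \<and> k \<ge> 2 \<and> distinct xs \<and> distinct cs \<and> set cs \<subseteq> CC \<and>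
     (\<forall>i<k. xs ! i \<in> cs ! i \<and> xs ! ((i + 1) mod k) \<in> cs ! i))"

definition cyc_edges :: "'a cycle \<Rightarrow> ('a \<times> 'a set) set" where
  "cyc_edges c = (let xs = fst c; cs = snd c; k = length xs in
     {(xs ! i, cs ! i) | i. i < k} \<union> {(xs ! ((i + 1) mod k), cs ! i) | i. i < k})"

definition cyc_len :: "'a cycle \<Rightarrow> nat" where
  "cyc_len c = 2 * length (fst c)"

text \<open>Sign of an edge under the forward orientation: +1 if it is traversed from the item
  to the set, -1 otherwise.\<close>
definition fwd_sign :: "'a cycle \<Rightarrow> ('a \<times> 'a set) \<Rightarrow> real" where
  "fwd_sign c e = (if \<exists>i<length (fst c). e = (fst c ! i, snd c ! i) then 1 else -1)"

definition cycle_decomp :: "'a set set \<Rightarrow> 'a cycle list \<Rightarrow> bool" where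
  "cycle_decomp CC \<sigma> = ((\<forall>i<length \<sigma>. is_cycle CC (\<sigma> ! i)) \<and>
     (\<forall>i<length \<sigma>. \<forall>j<length \<sigma>. i \<noteq> j \<longrightarrow> cyc_edges (\<sigma> ! i) \<inter> cyc_edges (\<sigma> ! j) = {}) \<and>
     (\<Union>i<length \<sigma>. cyc_edges (\<sigma> ! i)) = edges CC)"

definition alpha :: "'a set set \<Rightarrow> 'a cycle list \<Rightarrow> real" where
  "alpha CC \<sigma> = (1 / real (dim CC)) * (\<Sum>i<length \<sigma>. real (cyc_len (\<sigma> ! i)) ^ 2)"

text \<open>The set B_C(sigma): choose an orientation (t i = 1 forward, -1 backward) per cycle.
  Vectors are functions on pairs, taking value 0 outside the coordinate set.\<close>
definition Bset :: "'a cycle list \<Rightarrow> (('a \<times> 'a set) \<Rightarrow> real) set" where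
  "Bset \<sigma> = {b. \<exists>t::nat \<Rightarrow> real. (\<forall>i<length \<sigma>. t i \<in> {-1, 1}) \<and>
      b = (\<lambda>e. \<Sum>i<length \<sigma>. if e \<in> cyc_edges (\<sigma> ! i) then t i * fwd_sign (\<sigma> ! i) e else 0)}"

definition p0 :: "'a set set \<Rightarrow> ('a \<times> 'a set) \<Rightarrow> real" where
  "p0 CC e = 1 / real (dim CC)"

definition qbe :: "'a set set \<Rightarrow> (('a \<times> 'a set) \<Rightarrow> real) \<Rightarrow> real \<Rightarrow> ('a \<times> 'a set) \<Rightarrow> real" where
  "qbe CC b \<epsilon> e = 1 / real (dim CC) + \<epsilon> * b e / real (dim CC)"

text \<open>Law of N i.i.d. samples (as a probability mass function on sample sequences).\<close>
definition prodlaw :: "('e \<Rightarrow> real) \<Rightarrow> nat \<Rightarrow> (nat \<Rightarrow> 'e) \<Rightarrow> real" where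
  "prodlaw p N z = (\<Prod>i<N. p (z i))"

definition samples :: "'a set set \<Rightarrow> nat \<Rightarrow> (nat \<Rightarrow> ('a \<times> 'a set)) set" where
  "samples CC N = PiE {..<N} (\<lambda>_. edges CC)"

definition P0 :: "'a set set \<Rightarrow> nat \<Rightarrow> (nat \<Rightarrow> ('a \<times> 'a set)) \<Rightarrow> real" where
  "P0 CC N = prodlaw (p0 CC) N"

definition P1 :: "'a set set \<Rightarrow> 'a cycle list \<Rightarrow> real \<Rightarrow> nat \<Rightarrow> (nat \<Rightarrow> ('a \<times> 'a set)) \<Rightarrow> real" where
  "P1 CC \<sigma> \<epsilon> N z = (1 / real (card (Bset \<sigma>))) * (\<Sum>b\<in>Bset \<sigma>. prodlaw (qbe CC b \<epsilon>) N z)"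

definition chi2 :: "('z \<Rightarrow> real) \<Rightarrow> ('z \<Rightarrow> real) \<Rightarrow> 'z set \<Rightarrow> real" where
  "chi2 P Q \<Omega> = (\<Sum>z\<in>\<Omega>. Q z * (P z / Q z) ^ 2) - 1"

end

theory Submission
  imports Defs "HOL-Probability.Hoeffding"
begin

lemma cosh_bound:
  fixes y :: real
  shows "(exp y + exp (-y)) / 2 \<le> exp (y^2 / 2)"
proof -
  define h where "h = 2 * \<bar>y\<bar>"
  have h0: "h \<ge> 0" by (simp add: h_def)
  have H: "-h * (1/2) + ln (1 + (1/2) * (exp h - 1)) \<le> h^2 / 8"
    using Hoeffdings_lemma_aux[OF h0, of "1/2"] by (simp only:)
  have eq: "1 + (1/2) * (exp h - 1) = (1 + exp h) / 2" by (simp add: field_simps)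
  have "ln ((1 + exp h) / 2) \<le> h/2 + h^2/8" using H unfolding eq by linarith
  moreover have "h/2 + h^2/8 = \<bar>y\<bar> + y^2/2"
    by (simp add: h_def power2_eq_square)
  ultimately have "ln ((1 + exp h) / 2) \<le> \<bar>y\<bar> + y^2/2" by simp
  moreover have "(1 + exp h) / 2 > 0" by (simp add: add_pos_pos)
  ultimately have "(1 + exp h) / 2 \<le> exp (\<bar>y\<bar> + y^2/2)"
    by (metis exp_le_cancel_iff exp_ln)
  hence "(1 + exp h) / 2 \<le> exp \<bar>y\<bar> * exp (y^2/2)" by (simp add: exp_add)
  hence "(1 + exp h) / 2 / exp \<bar>y\<bar> \<le> exp (y^2/2)"
    by (simp add: divide_le_eq mult.commute)
  moreover have "(1 + exp h) / 2 / exp \<bar>y\<bar> = (exp \<bar>y\<bar> + exp (-\<bar>y\<bar>)) / 2"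
    proof -
    have "exp h = exp \<bar>y\<bar> * exp \<bar>y\<bar>" unfolding h_def mult_exp_exp by simp
    thus ?thesis by (simp add: field_simps exp_minus)
  qed
  moreover have "exp \<bar>y\<bar> + exp (-\<bar>y\<bar>) = exp y + exp (-y)"
    by (cases "y \<ge> 0") auto
  ultimately show ?thesis by (metis (no_types, lifting))
qed

lemma cyc_facts:
  assumes "is_cycle CC c"
  shows "finite (cyc_edges c)" "real (card (cyc_edges c)) = real (cyc_len c)"
    "(\<Sum>e\<in>cyc_edges c. fwd_sign c e) = 0" "cyc_edges c \<subseteq> edges CC"
proof -
  obtain xs cs where c: "c = (xs, cs)" by (cases c)
  define k where "k = length xs"
  have lc: "length cs = k" and k2: "k \<ge> 2" and dx: "distinct xs" and dc: "distinct cs"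
    and sc: "set cs \<subseteq> CC" and inc: "\<forall>i<k. xs ! i \<in> cs ! i \<and> xs ! ((i + 1) mod k) \<in> cs ! i"
    using assms unfolding is_cycle_def c k_def Let_def by auto
  define F where "F = (\<lambda>i. (xs ! i, cs ! i)) ` {..<k}"
  define Bk where "Bk = (\<lambda>i. (xs ! ((i + 1) mod k), cs ! i)) ` {..<k}"
  have ce: "cyc_edges c = F \<union> Bk"
    unfolding cyc_edges_def c F_def Bk_def k_def Let_def by auto
  have injF: "inj_on (\<lambda>i. (xs ! i, cs ! i)) {..<k}"
    using dc lc by (auto simp: inj_on_def nth_eq_iff_index_eq)
  have injB: "inj_on (\<lambda>i. (xs ! ((i + 1) mod k), cs ! i)) {..<k}"
    using dc lc by (auto simp: inj_on_def nth_eq_iff_index_eq)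
  have cF: "card F = k" using injF by (simp add: F_def card_image)
  have cB: "card Bk = k" using injB by (simp add: Bk_def card_image)
  have disj: "F \<inter> Bk = {}"
  proof (rule ccontr)
    assume "F \<inter> Bk \<noteq> {}"
    then obtain i j where ij: "i < k" "j < k" "xs ! i = xs ! ((j + 1) mod k)" "cs ! i = cs ! j"
      unfolding F_def Bk_def by auto
    have "i = j" using ij dc lc by (simp add: nth_eq_iff_index_eq)
    moreover have "(j + 1) mod k < k" using k2 by simp
    ultimately have "i = (i + 1) mod k" using ij dx by (simp add: nth_eq_iff_index_eq k_def)
    moreover have "(i + 1) mod k \<noteq> i"
    proof (cases "i + 1 < k")
      case True thus ?thesis by simp
    next
      case False
      hence "i + 1 = k" using ij by simp
      thus ?thesis using k2 by simp
    qed
    ultimately show False by simp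
  qed
  have fs: "fwd_sign c e = (if e \<in> F then 1 else -1)" for e
    unfolding fwd_sign_def c F_def k_def by auto
  show fin: "finite (cyc_edges c)" using ce F_def Bk_def by simp
  show "real (card (cyc_edges c)) = real (cyc_len c)"
    using ce disj cF cB F_def Bk_def by (simp add: card_Un_disjoint cyc_len_def c k_def)
  have "(\<Sum>e\<in>cyc_edges c. fwd_sign c e) = (\<Sum>e\<in>F. fwd_sign c e) + (\<Sum>e\<in>Bk. fwd_sign c e)"
    using ce disj F_def Bk_def by (simp add: sum.union_disjoint)
  also have "(\<Sum>e\<in>F. fwd_sign c e) = real k" using cF by (simp add: fs)
  also have "(\<Sum>e\<in>Bk. fwd_sign c e) = - real k" using cB disj
    by (subst sum.cong[OF refl, of _ _ "\<lambda>_. -1"]) (auto simp: fs)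
  finally show "(\<Sum>e\<in>cyc_edges c. fwd_sign c e) = 0" by simp
  show "cyc_edges c \<subseteq> edges CC"
    using inc sc lc unfolding ce F_def Bk_def edges_def by (auto intro: nth_mem)
qed

lemma sum_unique:
  fixes n :: nat
  assumes "i < n" "e \<in> C i" "\<forall>i<n. \<forall>j<n. i \<noteq> j \<longrightarrow> C i \<inter> C j = {}"
  shows "(\<Sum>j<n. if e \<in> C j then g j else (0::real)) = g i"
proof -
  have "(\<Sum>j<n. if e \<in> C j then g j else (0::real)) = (\<Sum>j\<in>{i}. if e \<in> C j then g j else 0)"
    using assms by (intro sum.mono_neutral_right) auto
  thus ?thesis using assms by simp
qed

lemma sum_swap_if:
  fixes n :: nat
  assumes "finite E" "\<And>i. i < n \<Longrightarrow> C i \<subseteq> E"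
  shows "(\<Sum>e\<in>E. \<Sum>i<n. if e \<in> C i then g i e else (0::real)) = (\<Sum>i<n. \<Sum>e\<in>C i. g i e)"
proof -
  have "(\<Sum>e\<in>E. \<Sum>i<n. if e \<in> C i then g i e else (0::real)) = (\<Sum>i<n. \<Sum>e\<in>E. if e \<in> C i then g i e else 0)"
    by (rule sum.swap)
  also have "\<dots> = (\<Sum>i<n. \<Sum>e\<in>E \<inter> C i. g i e)"
    using assms by (simp add: sum.inter_restrict)
  also have "\<dots> = (\<Sum>i<n. \<Sum>e\<in>C i. g i e)"
    using assms by (intro sum.cong refl) (simp add: Int_absorb1)
  finally show ?thesis .
qed

theorem lemma5p2:
  fixes X :: "'a set" and CC :: "'a set set" and \<sigma> :: "'a cycle list"
    and \<epsilon> :: real and N :: nat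
  assumes "finite X"
    and "\<forall>S\<in>CC. S \<subseteq> X \<and> card S \<ge> 2"
    and "card CC \<ge> card X"
    and "gconnected X CC"
    and "\<forall>S\<in>CC. even (card S)"
    and "\<forall>x\<in>X. even (card {S\<in>CC. x \<in> S})"
    and "cycle_decomp CC \<sigma>"
    and "0 \<le> \<epsilon>" and "\<epsilon> \<le> 1"
    and "N \<ge> 1"
  shows "chi2 (P1 CC \<sigma> \<epsilon> N) (P0 CC N) (samples CC N) + 1
           \<le> exp (real N ^ 2 * \<epsilon> ^ 4 / (2 * real (dim CC)) * alpha CC \<sigma>)"
proof -
  define E where "E = edges CC"
  define n where "n = length \<sigma>"
  define C where "C i = cyc_edges (\<sigma> ! i)" for i
  define f where "f i = fwd_sign (\<sigma> ! i)" for i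
  define L where "L i = real (cyc_len (\<sigma> ! i))" for i
  define bt where "bt t = (\<lambda>e. \<Sum>i<n. if e \<in> C i then t i * f i e else 0)" for t :: "nat \<Rightarrow> real"
  define T where "T = PiE {..<n} (\<lambda>_. {-1::real, 1})"
  define d where "d = real (dim CC)"
  have "CC \<subseteq> Pow X" using assms(2) by auto
  hence finCC: "finite CC" using assms(1) by (meson finite_Pow_iff finite_subset)
  have "E \<subseteq> X \<times> CC" using assms(2) unfolding E_def edges_def by auto
  hence finE: "finite E" using finCC assms(1) by (meson finite_SigmaI finite_subset)
  have dE: "d = real (card E)" unfolding d_def dim_def E_def ..
  have cyc: "is_cycle CC (\<sigma> ! i)" if "i < n" for i
    using assms(7) that unfolding cycle_decomp_def n_def by auto
  have disj: "\<forall>i<n. \<forall>j<n. i \<noteq> j \<longrightarrow> C i \<inter> C j = {}"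
    using assms(7) unfolding cycle_decomp_def n_def C_def by auto
  have cover: "(\<Union>i<n. C i) = E"
    using assms(7) unfolding cycle_decomp_def n_def C_def E_def by auto
  have Cfin: "finite (C i)" and Ccard: "real (card (C i)) = L i"
    and Csum: "(\<Sum>e\<in>C i. f i e) = 0" and CsubE: "C i \<subseteq> E" if "i < n" for i
    using cyc_facts[OF cyc[OF that]] unfolding C_def L_def f_def E_def by auto
  have fsq: "f i e * f i e = 1" for i e
    unfolding f_def fwd_sign_def by auto
  have bt_at: "bt t e = t i * f i e" if "i < n" "e \<in> C i" for t i e
    unfolding bt_def using sum_unique[OF that disj] by simp
  have inE: "\<exists>i<n. e \<in> C i" if "e \<in> E" for e
    using that cover by auto
  have B_eq: "Bset \<sigma> = bt ` T"
  proof
    show "Bset \<sigma> \<subseteq> bt ` T"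
    proof
      fix b assume "b \<in> Bset \<sigma>"
      then obtain t where t: "\<forall>i<n. t i \<in> {-1, 1}"
        "b = (\<lambda>e. \<Sum>i<n. if e \<in> C i then t i * f i e else 0)"
        unfolding Bset_def n_def C_def f_def by auto
      have "restrict t {..<n} \<in> T" using t(1) unfolding T_def by auto
      moreover have "bt (restrict t {..<n}) = b" unfolding bt_def t(2)
        by (intro ext sum.cong) auto
      ultimately show "b \<in> bt ` T" by blast
    qed
  next
    show "bt ` T \<subseteq> Bset \<sigma>"
    proof
      fix b assume "b \<in> bt ` T"
      then obtain t where t: "t \<in> T" "b = bt t" by auto
      have "\<forall>i<length \<sigma>. t i \<in> {-1, 1}" using t(1) unfolding T_def n_def by auto
      thus "b \<in> Bset \<sigma>" unfolding Bset_def t(2) bt_def n_def C_def f_def by blast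
    qed
  qed
  have inj: "inj_on bt T"
  proof
    fix t t' assume tt: "t \<in> T" "t' \<in> T" "bt t = bt t'"
    have "t i = t' i" for i
    proof (cases "i < n")
      case True
      obtain xs cs where c: "\<sigma> ! i = (xs, cs)" by (cases "\<sigma> ! i")
      have "length xs \<ge> 2" using cyc[OF True] unfolding c is_cycle_def Let_def by auto
      hence e: "(xs ! 0, cs ! 0) \<in> C i" unfolding C_def c cyc_edges_def Let_def by auto
      have f1: "f i (xs ! 0, cs ! 0) = 1" using \<open>length xs \<ge> 2\<close>
        unfolding f_def c fwd_sign_def by auto
      have "bt t (xs ! 0, cs ! 0) = bt t' (xs ! 0, cs ! 0)" using tt(3) by simp
      thus ?thesis using bt_at[OF True e] f1 by simp
    next
      case False
      thus ?thesis using tt(1,2) unfolding T_def by (auto simp: PiE_def extensional_def)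
    qed
    thus "t = t'" by auto
  qed
  have cardT: "card T = 2 ^ n" unfolding T_def by (simp add: card_PiE numeral_2_eq_2)
  have m: "card (Bset \<sigma>) = 2 ^ n" using B_eq inj cardT by (simp add: card_image)
  have sumb: "(\<Sum>e\<in>E. bt t e) = 0" for t
  proof -
    have "(\<Sum>e\<in>E. bt t e) = (\<Sum>i<n. \<Sum>e\<in>C i. t i * f i e)"
      unfolding bt_def by (rule sum_swap_if[OF finE CsubE])
    also have "\<dots> = 0" using Csum by (simp add: sum_distrib_left[symmetric])
    finally show ?thesis .
  qed
  have pt: "bt t e * bt t' e = (\<Sum>i<n. if e \<in> C i then t i * t' i else 0)" if eE: "e \<in> E" for t t' e
  proof -
    obtain i where i: "i < n" "e \<in> C i" using inE[OF eE] by blast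
    have "bt t e * bt t' e = t i * t' i * (f i e * f i e)" using bt_at[OF i] by simp
    also have "\<dots> = t i * t' i" using fsq by simp
    also have "\<dots> = (\<Sum>i<n. if e \<in> C i then t i * t' i else 0)"
      using sum_unique[OF i disj] by simp
    finally show ?thesis .
  qed
  have inner: "(\<Sum>e\<in>E. bt t e * bt t' e) = (\<Sum>i<n. t i * t' i * L i)" for t t'
  proof -
    have "(\<Sum>e\<in>E. bt t e * bt t' e) = (\<Sum>e\<in>E. \<Sum>i<n. if e \<in> C i then t i * t' i else 0)"
      using pt by (intro sum.cong) auto
    also have "\<dots> = (\<Sum>i<n. \<Sum>e\<in>C i. t i * t' i)"
      by (rule sum_swap_if[OF finE CsubE])
    also have "\<dots> = (\<Sum>i<n. t i * t' i * L i)"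
      using Ccard by (intro sum.cong) auto
    finally show ?thesis .
  qed
  have innerlb: "(\<Sum>i<n. t i * t' i * L i) \<ge> - d" if "t \<in> T" "t' \<in> T" for t t'
  proof -
    have "bt t e * bt t' e \<ge> -1" if eE: "e \<in> E" for e
    proof -
      obtain i where i: "i < n" "e \<in> C i" using inE[OF eE] by blast
      have "t i \<in> {-1,1}" "t' i \<in> {-1,1}" using \<open>t \<in> T\<close> \<open>t' \<in> T\<close> i unfolding T_def by auto
      thus ?thesis using pt[OF eE] sum_unique[OF i disj] by auto
    qed
    hence "(\<Sum>e\<in>E. bt t e * bt t' e) \<ge> (\<Sum>e\<in>E. -1)" by (intro sum_mono) auto
    thus ?thesis using inner dE by simp
  qed
  show ?thesis
  proof (cases "E = {}")
    case True
    have "samples CC N = {}" unfolding samples_def E_def[symmetric] True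
      using assms(10) by (auto simp: PiE_eq_empty_iff intro: exI[of _ 0])
    thus ?thesis by (simp add: chi2_def)
  next
    case False
    have dpos: "d > 0" using dE finE False by (simp add: card_gt_0_iff)
    define c where "c = \<epsilon>^2 / d"
    define S where "S t t' = (\<Sum>i<n. t i * t' i * L i)" for t t' :: "nat \<Rightarrow> real"
    define Q where "Q b = qbe CC b \<epsilon>" for b
    have qq: "(\<Sum>e\<in>E. Q (bt t) e * Q (bt t') e) = (1 + c * S t t') / d" for t t'
    proof -
      have "(\<Sum>e\<in>E. Q (bt t) e * Q (bt t') e) = (\<Sum>e\<in>E. (1 + \<epsilon> * bt t e + \<epsilon> * bt t' e + \<epsilon>^2 * (bt t e * bt t' e)) / d^2)"
        unfolding Q_def qbe_def d_def[symmetric]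
        using dpos by (intro sum.cong refl) (simp add: power2_eq_square field_simps)
      also have "\<dots> = (\<Sum>e\<in>E. 1 + \<epsilon> * bt t e + \<epsilon> * bt t' e + \<epsilon>^2 * (bt t e * bt t' e)) / d^2"
        by (simp add: sum_divide_distrib)
      also have "(\<Sum>e\<in>E. 1 + \<epsilon> * bt t e + \<epsilon> * bt t' e + \<epsilon>^2 * (bt t e * bt t' e)) = d + \<epsilon>^2 * S t t'"
        by (simp add: sum.distrib sum_distrib_left[symmetric] sumb inner S_def dE)
      also have "(d + \<epsilon>^2 * S t t') / d^2 = (1 + c * S t t') / d"
        using dpos by (simp add: c_def field_simps power2_eq_square)
      finally show ?thesis .
    qed
    define \<Omega> where "\<Omega> = samples CC N"
    have \<Omega>eq: "\<Omega> = PiE {..<N} (\<lambda>_. E)" unfolding \<Omega>_def samples_def E_def ..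
    have P0z: "P0 CC N z = (1/d)^N" for z unfolding P0_def prodlaw_def p0_def d_def by simp
    have trm: "(1/d)^N * (x / (1/d)^N)^2 = x^2 * d^N" for x
      using dpos by (simp add: power_one_over field_simps power2_eq_square)
    have "chi2 (P1 CC \<sigma> \<epsilon> N) (P0 CC N) \<Omega> + 1 = (\<Sum>z\<in>\<Omega>. P1 CC \<sigma> \<epsilon> N z ^ 2 * d^N)"
      unfolding chi2_def P0z trm by simp
    also have "\<dots> = (\<Sum>z\<in>\<Omega>. (1/2^n)^2 * (\<Sum>t\<in>T. \<Sum>t'\<in>T. \<Prod>j<N. Q (bt t) (z j) * Q (bt t') (z j)) * d^N)"
    proof (intro sum.cong refl)
      fix z
      have "P1 CC \<sigma> \<epsilon> N z = 1 / 2^n * (\<Sum>t\<in>T. \<Prod>j<N. Q (bt t) (z j))"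
        unfolding P1_def prodlaw_def m Q_def unfolding B_eq by (simp add: sum.reindex[OF inj])
      thus "P1 CC \<sigma> \<epsilon> N z ^ 2 * d^N = (1/2^n)^2 * (\<Sum>t\<in>T. \<Sum>t'\<in>T. \<Prod>j<N. Q (bt t) (z j) * Q (bt t') (z j)) * d^N"
        by (simp add: power2_eq_square sum_product prod.distrib)
    qed
    also have "\<dots> = (1/2^n)^2 * d^N * (\<Sum>t\<in>T. \<Sum>t'\<in>T. \<Sum>z\<in>\<Omega>. \<Prod>j<N. Q (bt t) (z j) * Q (bt t') (z j))"
    proof -
      have "(\<Sum>z\<in>\<Omega>. (1/2^n)^2 * (\<Sum>t\<in>T. \<Sum>t'\<in>T. \<Prod>j<N. Q (bt t) (z j) * Q (bt t') (z j)) * d^N)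
         = (1/2^n)^2 * d^N * (\<Sum>z\<in>\<Omega>. \<Sum>t\<in>T. \<Sum>t'\<in>T. \<Prod>j<N. Q (bt t) (z j) * Q (bt t') (z j))"
        by (simp add: sum_distrib_left sum_distrib_right mult_ac)
      also have "(\<Sum>z\<in>\<Omega>. \<Sum>t\<in>T. \<Sum>t'\<in>T. \<Prod>j<N. Q (bt t) (z j) * Q (bt t') (z j))
          = (\<Sum>t\<in>T. \<Sum>z\<in>\<Omega>. \<Sum>t'\<in>T. \<Prod>j<N. Q (bt t) (z j) * Q (bt t') (z j))"
        by (rule sum.swap)
      also have "\<dots> = (\<Sum>t\<in>T. \<Sum>t'\<in>T. \<Sum>z\<in>\<Omega>. \<Prod>j<N. Q (bt t) (z j) * Q (bt t') (z j))"
        by (intro sum.cong refl sum.swap)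
      finally show ?thesis .
    qed
    also have "\<dots> = (1/2^n)^2 * d^N * (\<Sum>t\<in>T. \<Sum>t'\<in>T. ((1 + c * S t t') / d)^N)"
    proof -
      have "(\<Sum>z\<in>\<Omega>. \<Prod>j<N. Q (bt t) (z j) * Q (bt t') (z j)) = ((1 + c * S t t') / d)^N" for t t'
        using prod_sum_PiE[of "{..<N}" "\<lambda>_. E" "\<lambda>_ e. Q (bt t) e * Q (bt t') e"] finE
        unfolding \<Omega>eq qq by simp
      thus ?thesis by simp
    qed
    also have "\<dots> = (1/2^n)^2 * (\<Sum>t\<in>T. \<Sum>t'\<in>T. (1 + c * S t t')^N)"
      using dpos by (simp add: sum_distrib_left power_divide)
    also have "\<dots> \<le> (1/2^n)^2 * (\<Sum>t\<in>T. \<Sum>t'\<in>T. exp (real N * c * S t t'))"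
    proof -
      have "(1 + c * S t t')^N \<le> exp (real N * c * S t t')" if "t \<in> T" "t' \<in> T" for t t'
      proof -
        have "c * S t t' \<ge> c * (-d)" using innerlb[OF that] dpos unfolding c_def S_def
          by (intro mult_left_mono) auto
        moreover have "\<epsilon>^2 \<le> 1" using assms(8,9) by (simp add: power_le_one)
        moreover have "c * (-d) = -(\<epsilon>^2)" using dpos unfolding c_def by simp
        ultimately have "1 + c * S t t' \<ge> 0" by linarith
        hence "(1 + c * S t t')^N \<le> exp (c * S t t')^N"
          by (intro power_mono) auto
        thus ?thesis by (simp add: exp_of_nat_mult[symmetric] mult.assoc)
      qed
      thus ?thesis by (intro mult_left_mono sum_mono) auto
    qed
    also have "\<dots> = (1/2^n)^2 * (\<Sum>t\<in>T. 2^n * (\<Prod>i<n. (exp (real N * c * L i) + exp (-(real N * c * L i))) / 2))"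
    proof -
      define a where "a = real N * c"
      have "(\<Sum>t'\<in>T. exp (real N * c * S t t')) = 2^n * (\<Prod>i<n. (exp (a * L i) + exp (-(a * L i))) / 2)"
        if "t \<in> T" for t
      proof -
        have "(\<Sum>t'\<in>T. exp (real N * c * S t t')) = (\<Sum>t'\<in>T. \<Prod>i<n. exp (a * t i * t' i * L i))"
          unfolding S_def a_def by (simp add: sum_distrib_left exp_sum mult.assoc)
        also have "\<dots> = (\<Prod>i<n. \<Sum>s\<in>{-1,1}. exp (a * t i * s * L i))"
          unfolding T_def by (rule prod_sum_PiE[symmetric]) auto
        also have "\<dots> = (\<Prod>i<n. 2 * ((exp (a * L i) + exp (-(a * L i))) / 2))"
        proof (intro prod.cong refl)
          fix i assume "i \<in> {..<n}"
          hence "t i \<in> {-1, 1}" using that unfolding T_def by auto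
          thus "(\<Sum>s\<in>{-1,1}. exp (a * t i * s * L i)) = 2 * ((exp (a * L i) + exp (-(a * L i))) / 2)"
            by auto
        qed
        also have "\<dots> = 2^n * (\<Prod>i<n. (exp (a * L i) + exp (-(a * L i))) / 2)"
          by (subst prod.distrib) simp
        finally show ?thesis .
      qed
      thus ?thesis unfolding a_def by (intro arg_cong2[where f = "(*)"] refl sum.cong) auto
    qed
    also have "\<dots> = (\<Prod>i<n. (exp (real N * c * L i) + exp (-(real N * c * L i))) / 2)"
      using cardT by (simp add: power2_eq_square field_simps)
    also have "\<dots> \<le> (\<Prod>i<n. exp ((real N * c * L i)^2 / 2))"
      by (intro prod_mono conjI cosh_bound) (simp add: add_pos_pos less_imp_le)
    also have "\<dots> = exp (\<Sum>i<n. (real N * c * L i)^2 / 2)"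
      by (simp add: exp_sum)
    also have "(\<Sum>i<n. (real N * c * L i)^2 / 2) = real N ^ 2 * \<epsilon> ^ 4 / (2 * real (dim CC)) * alpha CC \<sigma>"
      unfolding alpha_def d_def[symmetric] c_def L_def n_def
      using dpos by (simp add: sum_distrib_left sum_divide_distrib power_mult_distrib field_simps power2_eq_square eval_nat_numeral)
    finally show ?thesis unfolding \<Omega>_def .
  qed
qed

end
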